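(* Let $a>0$, $\eta\in(0,1)$ and $f\in\mathcal C_a$, and define $f^{\pm\eta}(s)=(1\pm\frac\eta2)f\big(s/(1\pm\frac\eta2)\big)$. Then: (1) $f^{\pm\eta}\in\mathcal C_{(2\pm\eta)a/2}$; (2) $(f^{\pm\eta})'(s)=f'\big(s/(1\pm\frac\eta2)\big)$ for all $s\in\mathbb R$; (3) $f^{+\eta}-f$ and $f-f^{-\eta}$ are decreasing on $\mathbb R_{\ge0}$; (4) $f^{-\eta}(s)\le f(s)\le f^{+\eta}(s)$ for all $s\in\mathbb R$, with $f^{-\eta}(s)=f(s)$ if and only if $|s|\ge a$, and $f^{+\eta}(s)=f(s)$ if and only if $|s|\ge(2+\eta)a/2$; (5) $\|f-f^{\pm\eta}\|_\infty=\frac\eta2f(0)$.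
   Context: For $b>0$, $\mathcal C_b$ is the set of $C^1$ functions $f:\mathbb R\to\mathbb R$ that are even, satisfy $f(s)=|s|$ for $|s|\ge b$ and are strictly convex on $[-b,b]$. Statements with $\pm$ hold for both signs. *)

theory Defs
  imports "HOL-Analysis.Analysis"
begin

definition strictly_convex_on :: "real set \<Rightarrow> (real \<Rightarrow> real) \<Rightarrow> bool" where
  "strictly_convex_on S f \<longleftrightarrow>
     (\<forall>x\<in>S. \<forall>y\<in>S. \<forall>t::real. x \<noteq> y \<and> 0 < t \<and> t < 1 \<longrightarrow>
        f ((1 - t) * x + t * y) < (1 - t) * f x + t * f y)"

definition C_class :: "real \<Rightarrow> (real \<Rightarrow> real) \<Rightarrow> bool" where
  "C_class b f \<longleftrightarrow>
     (\<forall>x. f differentiable (at x)) \<and> continuous_on UNIV (deriv f) \<and>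
     (\<forall>s. f (- s) = f s) \<and>
     (\<forall>s. b \<le> \<bar>s\<bar> \<longrightarrow> f s = \<bar>s\<bar>) \<and>
     strictly_convex_on {-b..b} f"

text \<open>Dilation: dil c f s = c * f (s / c); f^{+eta} = dil (1+eta/2) f, f^{-eta} = dil (1-eta/2) f.\<close>
definition dil :: "real \<Rightarrow> (real \<Rightarrow> real) \<Rightarrow> real \<Rightarrow> real" where
  "dil c f s = c * f (s / c)"

end

theory Submission
  imports Defs
begin

lemma C_facts:
  fixes a :: real and f :: "real \<Rightarrow> real"
  assumes a: "a > 0" and C: "C_class a f"
  shows "(\<forall>x. (f has_real_derivative deriv f x) (at x))
    \<and> (\<forall>x y. f x + deriv f x * (y - x) \<le> f y)
    \<and> (\<forall>x. \<bar>deriv f x\<bar> \<le> 1)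
    \<and> (\<forall>x. \<bar>x\<bar> < a \<longrightarrow> \<bar>x\<bar> < f x)
    \<and> (\<forall>x y. x \<le> y \<longrightarrow> deriv f x \<le> deriv f y)
    \<and> convex_on UNIV f"
proof -
  define D where "D = deriv f"
  have diff: "\<And>x. f differentiable (at x)" and contD: "continuous_on UNIV D"
    and ev: "\<And>s. f (- s) = f s" and ab: "\<And>s. a \<le> \<bar>s\<bar> \<Longrightarrow> f s = \<bar>s\<bar>"
    and sc: "strictly_convex_on {-a..a} f"
    using C unfolding C_class_def D_def by auto
  have der: "\<And>x. (f has_real_derivative D x) (at x)"
    using diff unfolding D_def by (simp add: DERIV_deriv_iff_real_differentiable)
  have isc: "\<And>x. isCont D x" using contD by (simp add: continuous_on_eq_continuous_at)
  have cvA: "convex_on {-a..a} f"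
  proof (rule convex_on_linorderI)
    fix t x y :: real assume "t > 0" "t < 1" "x \<in> {-a..a}" "y \<in> {-a..a}" "x < y"
    then show "f ((1 - t) *\<^sub>R x + t *\<^sub>R y) \<le> (1 - t) * f x + t * f y"
      using sc unfolding strictly_convex_on_def by (auto intro!: less_imp_le)
  qed simp
  have tanI: "f x + D x * (y - x) \<le> f y" if "x \<in> {-a<..<a}" "y \<in> {-a..a}" for x y
  proof -
    have "f y - f x \<ge> D x * (y - x)"
      by (rule convex_on_imp_above_tangent[OF cvA]) (use that der in \<open>auto intro: has_field_derivative_at_within\<close>)
    then show ?thesis by simp
  qed
  have monoI: "D x \<le> D y" if "x \<in> {-a<..<a}" "y \<in> {-a<..<a}" "x \<le> y" for x y
  proof -
    have "f x + D x * (y - x) \<le> f y" "f y + D y * (x - y) \<le> f x" using tanI that by auto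
    then have "(D y - D x) * (y - x) \<ge> 0" by (simp add: algebra_simps)
    then show ?thesis using that
      by (cases "x = y") (auto simp: zero_le_mult_iff)
  qed
  have Dr: "D y = 1" if "y > a" for y
  proof -
    have "((\<lambda>x. x) has_real_derivative 1) (at y)" by (rule DERIV_ident)
    then have "(f has_real_derivative 1) (at y)"
      by (rule has_field_derivative_transform_within_open[where S="{a<..}"]) (use that a ab in auto)
    then show ?thesis using der DERIV_unique by blast
  qed
  have Dl: "D y = -1" if "y < -a" for y
  proof -
    have "((\<lambda>x. - x) has_real_derivative -1) (at y)" by (auto intro!: derivative_eq_intros)
    then have "(f has_real_derivative -1) (at y)"
      by (rule has_field_derivative_transform_within_open[where S="{..<-a}"]) (use that a ab in auto)
    then show ?thesis using der DERIV_unique by blast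
  qed
  have Da: "D a = 1"
  proof -
    have "(D \<longlongrightarrow> D a) (at_right a)" using isc by (simp add: isCont_def filterlim_at_split)
    moreover have "(D \<longlongrightarrow> 1) (at_right a)"
    proof (rule tendsto_eventually)
      show "\<forall>\<^sub>F x in at_right a. D x = 1"
        by (rule eventually_mono[OF eventually_at_right_real[of a "a+1"]]) (auto intro: Dr)
    qed
    ultimately show ?thesis using tendsto_unique by (metis trivial_limit_at_right_real)
  qed
  have Dma: "D (-a) = -1"
  proof -
    have "(D \<longlongrightarrow> D (-a)) (at_left (-a))" using isc by (simp add: isCont_def filterlim_at_split)
    moreover have "(D \<longlongrightarrow> -1) (at_left (-a))"
    proof (rule tendsto_eventually)
      show "\<forall>\<^sub>F x in at_left (-a). D x = -1"
        by (rule eventually_mono[OF eventually_at_left_real[of "-a-1" "-a"]]) (auto intro: Dl)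
    qed
    ultimately show ?thesis using tendsto_unique by (metis trivial_limit_at_left_real)
  qed
  have Dle: "D x \<le> 1" if "x \<in> {-a<..<a}" for x
  proof -
    have "(D \<longlongrightarrow> D a) (at_left a)" using isc by (simp add: isCont_def filterlim_at_split)
    moreover have "\<forall>\<^sub>F y in at_left a. D x \<le> D y"
      by (rule eventually_mono[OF eventually_at_left_real[of x a]]) (use that in \<open>auto intro: monoI\<close>)
    ultimately have "D x \<le> D a" by (rule tendsto_lowerbound) simp
    then show ?thesis using Da by simp
  qed
  have Dge: "-1 \<le> D x" if "x \<in> {-a<..<a}" for x
  proof -
    have "(D \<longlongrightarrow> D (-a)) (at_right (-a))" using isc by (simp add: isCont_def filterlim_at_split)
    moreover have "\<forall>\<^sub>F y in at_right (-a). D y \<le> D x"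
      by (rule eventually_mono[OF eventually_at_right_real[of "-a" x]]) (use that in \<open>auto intro: monoI\<close>)
    ultimately have "D (-a) \<le> D x" by (rule tendsto_upperbound) simp
    then show ?thesis using Dma by simp
  qed
  have Dabs: "\<bar>D x\<bar> \<le> 1" for x
    using Dle[of x] Dge[of x] Dr[of x] Dl[of x] Da Dma
    by (cases "x < -a"; cases "x > a"; cases "x = a"; cases "x = -a") auto
  have mono: "D x \<le> D y" if xy: "x \<le> y" for x y
  proof -
    consider "x < -a" | "x = -a" | "x \<in> {-a<..<a}" | "x = a" | "x > a" by fastforce
    then show ?thesis
    proof cases
      case 1 then show ?thesis using Dabs[of y] Dl[of x] by simp
    next
      case 2 then show ?thesis using Dabs[of y] Dma by simp
    next
      case 3
      consider "y \<in> {-a<..<a}" | "y \<ge> a" using xy 3 by fastforce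
      then show ?thesis
      proof cases
        case 1 then show ?thesis using monoI 3 that by blast
      next
        case 2 then have "D y = 1" using Da Dr by (cases "y = a") auto
        then show ?thesis using Dabs[of x] by simp
      qed
    next
      case 4 then show ?thesis using that Da Dr by (cases "y = a") auto
    next
      case 5 then show ?thesis using that Dr by auto
    qed
  qed
  have cv: "convex_on UNIV f"
    by (rule convex_on_realI[where f'=D]) (use der mono in auto)
  have tan: "f x + D x * (y - x) \<le> f y" for x y
  proof -
    have "f y - f x \<ge> D x * (y - x)"
      by (rule convex_on_imp_above_tangent[OF cv]) (use der in auto)
    then show ?thesis by simp
  qed
  have gt: "\<bar>x\<bar> < f x" if "\<bar>x\<bar> < a" for x
  proof -
    have sc': "f ((1 - 1/2) * u + (1/2) * v) < (1 - 1/2) * f u + (1/2) * f v"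
      if "u \<in> {-a..a}" "v \<in> {-a..a}" "u \<noteq> v" for u v
      using sc that unfolding strictly_convex_on_def
      by (metis (no_types) field_sum_of_halves half_gt_zero_iff less_add_same_cancel2 zero_less_one)
    have fa: "f a = a" "f (-a) = a" using ab a by auto
    have g1: "y \<le> f y" for y using tan[of a y] fa Da by simp
    have g2: "- y \<le> f y" for y using tan[of "-a" y] fa Dma by simp
    have "x < f x"
    proof (rule ccontr)
      assume "\<not> x < f x" then have e: "f x = x" using g1[of x] by simp
      have "f ((1 - 1/2) * x + (1/2) * a) < (1 - 1/2) * f x + (1/2) * f a"
        using that by (intro sc') auto
      then show False using e fa g1[of "(1 - 1/2) * x + (1/2) * a"] by simp
    qed
    moreover have "- x < f x"
    proof (rule ccontr)
      assume "\<not> - x < f x" then have e: "f x = - x" using g2[of x] by simp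
      have "f ((1 - 1/2) * x + (1/2) * (-a)) < (1 - 1/2) * f x + (1/2) * f (-a)"
        using that by (intro sc') auto
      then show False using e fa g2[of "(1 - 1/2) * x + (1/2) * (-a)"] by simp
    qed
    ultimately show ?thesis by (simp add: abs_less_iff)
  qed
  show ?thesis using der tan Dabs gt mono cv unfolding D_def by blast
qed

lemma dil_deriv:
  fixes a c :: real and f :: "real \<Rightarrow> real"
  assumes a: "a > 0" and C: "C_class a f" and c: "c > 0"
  shows "(dil c f has_real_derivative deriv f (s / c)) (at s)"
proof -
  have der: "\<And>x. (f has_real_derivative deriv f x) (at x)" using C_facts[OF a C] by blast
  have "((\<lambda>s. c * f (s / c)) has_real_derivative c * (deriv f (s / c) * (1 / c))) (at s)"
    by (rule DERIV_cmult, rule DERIV_chain2[OF der]) (use c in \<open>auto intro!: derivative_eq_intros\<close>)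
  then show ?thesis using c unfolding dil_def[abs_def] by simp
qed

lemma dil_deriv_eq:
  fixes a c :: real and f :: "real \<Rightarrow> real"
  assumes a: "a > 0" and C: "C_class a f" and c: "c > 0"
  shows "deriv (dil c f) s = deriv f (s / c)"
  using dil_deriv[OF assms] by (rule DERIV_imp_deriv)

lemma dil_C:
  fixes a c :: real and f :: "real \<Rightarrow> real"
  assumes a: "a > 0" and C: "C_class a f" and c: "c > 0"
  shows "C_class (c * a) (dil c f)"
proof -
  have contD: "continuous_on UNIV (deriv f)"
    and ev: "\<And>s. f (- s) = f s" and ab: "\<And>s. a \<le> \<bar>s\<bar> \<Longrightarrow> f s = \<bar>s\<bar>"
    and sc: "strictly_convex_on {-a..a} f"
    using C unfolding C_class_def by auto
  have d1: "\<forall>x. dil c f differentiable (at x)"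
    using dil_deriv[OF assms] real_differentiable_def by blast
  have "deriv (dil c f) = (\<lambda>s. deriv f (s / c))" using dil_deriv_eq[OF assms] by blast
  moreover have "continuous_on UNIV (\<lambda>s. deriv f (s / c))"
    by (rule continuous_on_compose2[OF contD]) (use c in \<open>auto intro!: continuous_intros\<close>)
  ultimately have d2: "continuous_on UNIV (deriv (dil c f))" by simp
  have d3: "\<forall>s. dil c f (- s) = dil c f s" unfolding dil_def using ev
    by (metis minus_divide_left)
  have d4: "\<forall>s. c * a \<le> \<bar>s\<bar> \<longrightarrow> dil c f s = \<bar>s\<bar>"
  proof (intro allI impI)
    fix s assume "c * a \<le> \<bar>s\<bar>"
    then have "a \<le> \<bar>s / c\<bar>" using c by (simp add: le_divide_eq mult.commute)
    then show "dil c f s = \<bar>s\<bar>" using ab c unfolding dil_def by simp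
  qed
  have d5: "strictly_convex_on {-(c*a)..c*a} (dil c f)"
    unfolding strictly_convex_on_def
  proof (intro ballI allI impI)
    fix x y t :: real assume x: "x \<in> {-(c*a)..c*a}" and y: "y \<in> {-(c*a)..c*a}" and h: "x \<noteq> y \<and> 0 < t \<and> t < 1"
    have xc: "x / c \<in> {-a..a}" "y / c \<in> {-a..a}" using x y c
      by (auto simp: divide_le_eq le_divide_eq mult.commute)
    have "x / c \<noteq> y / c" using h c by simp
    then have "f ((1 - t) * (x / c) + t * (y / c)) < (1 - t) * f (x / c) + t * f (y / c)"
      using sc xc h unfolding strictly_convex_on_def by blast
    then have "c * f ((1 - t) * (x / c) + t * (y / c)) < c * ((1 - t) * f (x / c) + t * f (y / c))"
      using c by (rule mult_strict_left_mono)
    moreover have "((1 - t) * x + t * y) / c = (1 - t) * (x / c) + t * (y / c)"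
      by (simp add: add_divide_distrib)
    ultimately show "dil c f ((1 - t) * x + t * y) < (1 - t) * dil c f x + t * dil c f y"
      unfolding dil_def by (simp add: algebra_simps)
  qed
  show ?thesis unfolding C_class_def using d1 d2 d3 d4 d5 by simp
qed

lemma dil_small:
  fixes a c :: real and f :: "real \<Rightarrow> real"
  assumes a: "a > 0" and C: "C_class a f" and c0: "c > 0" and c1: "c < 1"
  shows "(\<forall>s. dil c f s \<le> f s) \<and> (\<forall>s. dil c f s = f s \<longleftrightarrow> \<bar>s\<bar> \<ge> a)
    \<and> antimono_on {0::real..} (\<lambda>s. f s - dil c f s)
    \<and> (SUP s. \<bar>f s - dil c f s\<bar>) = (1 - c) * f 0"
proof -
  define D where "D = deriv f"
  have der: "\<And>x. (f has_real_derivative D x) (at x)"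
    and tan: "\<And>x y. f x + D x * (y - x) \<le> f y"
    and Dabs: "\<And>x. \<bar>D x\<bar> \<le> 1"
    and gt: "\<And>x. \<bar>x\<bar> < a \<Longrightarrow> \<bar>x\<bar> < f x"
    and mono: "\<And>x y. x \<le> y \<Longrightarrow> D x \<le> D y"
    and cv: "convex_on UNIV f"
    using C_facts[OF a C] unfolding D_def by auto
  have ab: "\<And>s. a \<le> \<bar>s\<bar> \<Longrightarrow> f s = \<bar>s\<bar>" using C unfolding C_class_def by auto
  have K: "0 \<le> f y - y * D y" for y
  proof -
    have "y * D y \<le> \<bar>y\<bar>" using Dabs[of y]
      proof -
      have "\<bar>y * D y\<bar> \<le> \<bar>y\<bar>" using Dabs[of y] by (simp add: abs_mult mult_left_le)
      then show ?thesis by (meson abs_ge_self order_trans)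
    qed
    moreover have "\<bar>y\<bar> \<le> f y" using gt[of y] ab[of y] by (cases "\<bar>y\<bar> < a") auto
    ultimately show ?thesis by simp
  qed
  have Ks: "0 < f y - y * D y" if "\<bar>y\<bar> < a" for y
  proof -
    have "y * D y \<le> \<bar>y\<bar>" using Dabs[of y]
      proof -
      have "\<bar>y * D y\<bar> \<le> \<bar>y\<bar>" using Dabs[of y] by (simp add: abs_mult mult_left_le)
      then show ?thesis by (meson abs_ge_self order_trans)
    qed
    then show ?thesis using gt[OF that] by simp
  qed
  have key0: "f (c * t) - c * f t \<ge> (1 - c) * (f t - t * D t)" for t
  proof -
    have "f t + D t * (c * t - t) \<le> f (c * t)" by (rule tan)
    then show ?thesis by (simp add: algebra_simps)
  qed
  have key: "f s - dil c f s \<ge> (1 - c) * (f (s / c) - (s / c) * D (s / c))" for s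
    using key0[of "s / c"] c0 unfolding dil_def by simp
  have p1: "dil c f s \<le> f s" for s
  proof -
    have "0 \<le> (1 - c) * (f (s / c) - (s / c) * D (s / c))" using K[of "s / c"] c1 by simp
    then show ?thesis using key[of s] by simp
  qed
  have p2: "dil c f s = f s \<longleftrightarrow> \<bar>s\<bar> \<ge> a" for s
  proof
    assume h: "\<bar>s\<bar> \<ge> a"
    have "\<bar>s\<bar> \<le> \<bar>s / c\<bar>" using c0 c1 by (simp add: abs_divide le_divide_eq mult_left_le)
    then have "f (s / c) = \<bar>s / c\<bar>" using h ab by simp
    then show "dil c f s = f s" unfolding dil_def using c0 ab[OF h] by (simp add: abs_divide)
  next
    assume e: "dil c f s = f s"
    show "\<bar>s\<bar> \<ge> a"
    proof (rule ccontr)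
      assume h: "\<not> \<bar>s\<bar> \<ge> a"
      show False
      proof (cases "\<bar>s / c\<bar> < a")
        case True
        have "0 < (1 - c) * (f (s / c) - (s / c) * D (s / c))" using Ks[OF True] c1 by simp
        then show False using key[of s] e by simp
      next
        case False
        then have "dil c f s = \<bar>s\<bar>" unfolding dil_def using ab c0 by (simp add: abs_divide)
        then show False using e gt[of s] h by simp
      qed
    qed
  qed
  have p3: "antimono_on {0::real..} (\<lambda>s. f s - dil c f s)"
    unfolding monotone_on_def
  proof (intro ballI impI)
    fix x y :: real assume x: "x \<in> {0..}" and y: "y \<in> {0..}" and xy: "x \<le> y"
    show "f y - dil c f y \<le> f x - dil c f x"
    proof (rule DERIV_nonpos_imp_nonincreasing[OF xy])
      fix z assume z: "x \<le> z" "z \<le> y"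
      have "((\<lambda>s. f s - dil c f s) has_real_derivative D z - D (z / c)) (at z)"
        using der dil_deriv[OF a C c0, of z] unfolding D_def by (auto intro!: derivative_intros)
      moreover have "z \<le> z / c" using z x c0 c1 by (simp add: le_divide_eq mult_left_le)
      ultimately show "\<exists>y. ((\<lambda>s. f s - dil c f s) has_real_derivative y) (at z) \<and> y \<le> 0"
        using mono by force
    qed
  qed
  have bnd: "\<bar>f s - dil c f s\<bar> \<le> (1 - c) * f 0" for s
  proof -
    have "f ((1 - c) *\<^sub>R 0 + c *\<^sub>R (s / c)) \<le> (1 - c) * f 0 + c * f (s / c)"
      using convex_onD[OF cv, of c 0 "s / c"] c0 c1 by simp
    then have "f s \<le> (1 - c) * f 0 + dil c f s" unfolding dil_def using c0 by simp
    then show ?thesis using p1[of s] by simp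
  qed
  have at0: "\<bar>f 0 - dil c f 0\<bar> = (1 - c) * f 0"
    using p1[of 0] unfolding dil_def by (simp add: algebra_simps)
  have p4: "(SUP s. \<bar>f s - dil c f s\<bar>) = (1 - c) * f 0"
  proof (rule antisym)
    show "(SUP s. \<bar>f s - dil c f s\<bar>) \<le> (1 - c) * f 0" by (rule cSUP_least) (auto intro: bnd)
    have "\<bar>f 0 - dil c f 0\<bar> \<le> (SUP s. \<bar>f s - dil c f s\<bar>)"
      by (rule cSUP_upper) (auto intro!: bdd_aboveI2 bnd)
    then show "(1 - c) * f 0 \<le> (SUP s. \<bar>f s - dil c f s\<bar>)" using at0 by simp
  qed
  show ?thesis using p1 p2 p3 p4 by blast
qed

lemma dil_big:
  fixes a c :: real and f :: "real \<Rightarrow> real"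
  assumes a: "a > 0" and C: "C_class a f" and c1: "c > 1"
  shows "(\<forall>s. f s \<le> dil c f s) \<and> (\<forall>s. dil c f s = f s \<longleftrightarrow> \<bar>s\<bar> \<ge> c * a)
    \<and> antimono_on {0::real..} (\<lambda>s. dil c f s - f s)
    \<and> (SUP s. \<bar>f s - dil c f s\<bar>) = (c - 1) * f 0"
proof -
  have c0: "c > 0" using c1 by simp
  define D where "D = deriv f"
  have der: "\<And>x. (f has_real_derivative D x) (at x)"
    and tan: "\<And>x y. f x + D x * (y - x) \<le> f y"
    and Dabs: "\<And>x. \<bar>D x\<bar> \<le> 1"
    and gt: "\<And>x. \<bar>x\<bar> < a \<Longrightarrow> \<bar>x\<bar> < f x"
    and mono: "\<And>x y. x \<le> y \<Longrightarrow> D x \<le> D y"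
    and cv: "convex_on UNIV f"
    using C_facts[OF a C] unfolding D_def by auto
  have ab: "\<And>s. a \<le> \<bar>s\<bar> \<Longrightarrow> f s = \<bar>s\<bar>" using C unfolding C_class_def by auto
  have yD: "y * D y \<le> \<bar>y\<bar>" for y using Dabs[of y]
      proof -
      have "\<bar>y * D y\<bar> \<le> \<bar>y\<bar>" using Dabs[of y] by (simp add: abs_mult mult_left_le)
      then show ?thesis by (meson abs_ge_self order_trans)
    qed
  have K: "0 \<le> f y - y * D y" for y
  proof -
    have "\<bar>y\<bar> \<le> f y" using gt[of y] ab[of y] by (cases "\<bar>y\<bar> < a") auto
    then show ?thesis using yD[of y] by simp
  qed
  have Ks: "0 < f y - y * D y" if "\<bar>y\<bar> < a" for y
    using gt[OF that] yD[of y] by simp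
  have key: "dil c f s - f s \<ge> (c - 1) * (f s - s * D s)" for s
  proof -
    have "f s + D s * (s / c - s) \<le> f (s / c)" by (rule tan)
    then have "c * (f s + D s * (s / c - s)) \<le> c * f (s / c)" using c0 by simp
    moreover have "c * (f s + D s * (s / c - s)) = c * f s + D s * s - c * (s * D s)"
      using c0 by (simp add: algebra_simps)
    ultimately have "c * f s + D s * s - c * (s * D s) \<le> c * f (s / c)" by simp
    moreover have "(c - 1) * (f s - s * D s) = c * f s - f s - c * (s * D s) + s * D s"
      by (simp add: algebra_simps)
    ultimately show ?thesis unfolding dil_def by (simp add: algebra_simps)
  qed
  have p1: "f s \<le> dil c f s" for s
  proof -
    have "0 \<le> (c - 1) * (f s - s * D s)" using K[of s] c1 by simp
    then show ?thesis using key[of s] by simp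
  qed
  have p2: "dil c f s = f s \<longleftrightarrow> \<bar>s\<bar> \<ge> c * a" for s
  proof
    assume h: "\<bar>s\<bar> \<ge> c * a"
    have "a \<le> \<bar>s / c\<bar>" using h c0 by (simp add: abs_divide le_divide_eq mult.commute)
    then have "f (s / c) = \<bar>s / c\<bar>" using ab by simp
    moreover have "a \<le> \<bar>s\<bar>" using h c1 a by (metis less_le_not_le mult_le_cancel_right1 order.trans)
    ultimately show "dil c f s = f s" unfolding dil_def using c0 ab by (simp add: abs_divide)
  next
    assume e: "dil c f s = f s"
    show "\<bar>s\<bar> \<ge> c * a"
    proof (rule ccontr)
      assume h: "\<not> \<bar>s\<bar> \<ge> c * a"
      show False
      proof (cases "\<bar>s\<bar> < a")
        case True
        have "0 < (c - 1) * (f s - s * D s)" using Ks[OF True] c1 by simp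
        then show False using key[of s] e by simp
      next
        case False
        then have fs: "f s = \<bar>s\<bar>" using ab by simp
        have "\<bar>s / c\<bar> < a" using h c0 by (simp add: abs_divide divide_less_eq mult.commute)
        then have "\<bar>s / c\<bar> < f (s / c)" by (rule gt)
        then have "c * \<bar>s / c\<bar> < c * f (s / c)" using c0 by (rule mult_strict_left_mono)
        moreover have "c * \<bar>s / c\<bar> = \<bar>s\<bar>" using c0 by (simp add: abs_divide)
        ultimately have "\<bar>s\<bar> < dil c f s" unfolding dil_def by simp
        then show False using e fs by simp
      qed
    qed
  qed
  have p3: "antimono_on {0::real..} (\<lambda>s. dil c f s - f s)"
    unfolding monotone_on_def
  proof (intro ballI impI)
    fix x y :: real assume x: "x \<in> {0..}" and y: "y \<in> {0..}" and xy: "x \<le> y"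
    show "dil c f y - f y \<le> dil c f x - f x"
    proof (rule DERIV_nonpos_imp_nonincreasing[OF xy])
      fix z assume z: "x \<le> z" "z \<le> y"
      have "((\<lambda>s. dil c f s - f s) has_real_derivative D (z / c) - D z) (at z)"
        using der dil_deriv[OF a C c0, of z] unfolding D_def by (auto intro!: derivative_intros)
      moreover have "z / c \<le> z" using z x c1 mult_left_mono[of 1 c z] by (simp add: divide_le_eq)
      ultimately show "\<exists>y. ((\<lambda>s. dil c f s - f s) has_real_derivative y) (at z) \<and> y \<le> 0"
        using mono by force
    qed
  qed
  have bnd: "\<bar>f s - dil c f s\<bar> \<le> (c - 1) * f 0" for s
  proof -
    have "f ((1 - 1 / c) *\<^sub>R 0 + (1 / c) *\<^sub>R s) \<le> (1 - 1 / c) * f 0 + (1 / c) * f s"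
      using convex_onD[OF cv, of "1 / c" 0 s] c1 by simp
    then have "f (s / c) \<le> (1 - 1 / c) * f 0 + (1 / c) * f s" by simp
    then have "c * f (s / c) \<le> c * ((1 - 1 / c) * f 0 + (1 / c) * f s)" using c0 by simp
    also have "\<dots> = (c - 1) * f 0 + f s" using c0 by (simp add: algebra_simps)
    finally have "dil c f s \<le> (c - 1) * f 0 + f s" unfolding dil_def .
    then show ?thesis using p1[of s] by simp
  qed
  have at0: "\<bar>f 0 - dil c f 0\<bar> = (c - 1) * f 0"
    using p1[of 0] unfolding dil_def by (simp add: algebra_simps)
  have p4: "(SUP s. \<bar>f s - dil c f s\<bar>) = (c - 1) * f 0"
  proof (rule antisym)
    show "(SUP s. \<bar>f s - dil c f s\<bar>) \<le> (c - 1) * f 0" by (rule cSUP_least) (auto intro: bnd)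
    have "\<bar>f 0 - dil c f 0\<bar> \<le> (SUP s. \<bar>f s - dil c f s\<bar>)"
      by (rule cSUP_upper) (auto intro!: bdd_aboveI2 bnd)
    then show "(c - 1) * f 0 \<le> (SUP s. \<bar>f s - dil c f s\<bar>)" using at0 by simp
  qed
  show ?thesis using p1 p2 p3 p4 by blast
qed

theorem lemma3p4:
  fixes a \<eta> :: real and f :: "real \<Rightarrow> real"
  assumes "a > 0" and "0 < \<eta>" and "\<eta> < 1" and "C_class a f"
  defines "fp \<equiv> dil (1 + \<eta> / 2) f" and "fm \<equiv> dil (1 - \<eta> / 2) f"
  shows "(C_class ((2 + \<eta>) * a / 2) fp \<and> C_class ((2 - \<eta>) * a / 2) fm) \<and>
         (\<forall>s. deriv fp s = deriv f (s / (1 + \<eta> / 2))) \<and>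
         (\<forall>s. deriv fm s = deriv f (s / (1 - \<eta> / 2))) \<and>
         antimono_on {0::real..} (\<lambda>s. fp s - f s) \<and>
         antimono_on {0::real..} (\<lambda>s. f s - fm s) \<and>
         (\<forall>s. fm s \<le> f s \<and> f s \<le> fp s) \<and>
         (\<forall>s. fm s = f s \<longleftrightarrow> \<bar>s\<bar> \<ge> a) \<and>
         (\<forall>s. fp s = f s \<longleftrightarrow> \<bar>s\<bar> \<ge> (2 + \<eta>) * a / 2) \<and>
         (SUP s. \<bar>f s - fp s\<bar>) = \<eta> / 2 * f 0 \<and>
         (SUP s. \<bar>f s - fm s\<bar>) = \<eta> / 2 * f 0"
proof -
  have cp: "1 + \<eta> / 2 > 1" and cm0: "1 - \<eta> / 2 > 0" and cm1: "1 - \<eta> / 2 < 1"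
    using assms(2,3) by auto
  have e1: "(2 + \<eta>) * a / 2 = (1 + \<eta> / 2) * a" and e2: "(2 - \<eta>) * a / 2 = (1 - \<eta> / 2) * a"
    by (simp_all add: field_simps)
  have e3: "1 + \<eta> / 2 - 1 = \<eta> / 2" and e4: "1 - (1 - \<eta> / 2) = \<eta> / 2" by simp_all
  have A: "C_class ((2 + \<eta>) * a / 2) fp" unfolding e1 fp_def
    using dil_C[OF assms(1,4)] cp by simp
  have B: "C_class ((2 - \<eta>) * a / 2) fm" unfolding e2 fm_def
    using dil_C[OF assms(1,4) cm0] .
  have Dp: "\<forall>s. deriv fp s = deriv f (s / (1 + \<eta> / 2))"
    unfolding fp_def using dil_deriv_eq[OF assms(1,4)] cp by simp
  have Dm: "\<forall>s. deriv fm s = deriv f (s / (1 - \<eta> / 2))"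
    unfolding fm_def using dil_deriv_eq[OF assms(1,4) cm0] by simp
  note Big = dil_big[OF assms(1,4) cp, folded fp_def, unfolded e3 e1[symmetric]]
  note Small = dil_small[OF assms(1,4) cm0 cm1, folded fm_def, unfolded e4]
  show ?thesis using A B Dp Dm Big Small by blast
qed

end
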